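(* Let $\lambda>-1/2$, $\lambda\ne0$, $M,N\ge0$ integers, $a_0,\dots,a_M\in\mathbb{R}$, $a_{M+1}=a_{M+2}=0$, and $f_M(x)=\sum_{m=0}^M a_mC^{(\lambda)}_m(x)$. For $0\le n\le N$ and $y\in[-1,1]$ write $$\int_{-1}^{y}f_M(y-1-t)C^{(\lambda)}_n(t)\,\mathrm{d}t=\sum_{k=0}^{M+N+1}R^{(\lambda)}_{k,n}C^{(\lambda)}_k(y),$$ and set $R^{(\lambda)}_{k,-1}:=0$ for all $k$ and $R^{(\lambda)}_{M+N+2,n}:=0$. Then $$R^{(\lambda)}_{k,0}=\begin{cases}0,&k>M+1,\\[1mm] \dfrac{a_{k-1}}{2(k+\lambda-1)}-\dfrac{a_{k+1}}{2(k+\lambda+1)},&1\le k\le M+1,\\[2mm] \displaystyle\sum_{j=1}^{M+1}(-1)^{j+1}\frac{(2\lambda)_j}{j!}R^{(\lambda)}_{j,0},&k=0,\end{cases}$$ and for $0\le n\le N-1$ and $1\le k\le M+N$, $$R^{(\lambda)}_{k,n+1}=S^{(\lambda)}_nR^{(\lambda)}_{k,0}+R^{(\lambda)}_{k,n-1}+\frac{n+\lambda}{k+\lambda-1}R^{(\lambda)}_{k-1,n}-\frac{n+\lambda}{k+\lambda+1}R^{(\lambda)}_{k+1,n},$$ where $S^{(\lambda)}_n=\dfrac{2(-1)^{n+1}(\lambda+n)(2\lambda-1)_n}{(n+1)!}$.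
   Context: Gegenbauer polynomials $C^{(\lambda)}_n$ ($\lambda>-1/2$, $\lambda\ne0$) are defined by $C^{(\lambda)}_{-1}=0$, $C^{(\lambda)}_0=1$, $2(n+\lambda)xC^{(\lambda)}_n(x)=(n+1)C^{(\lambda)}_{n+1}(x)+(n+2\lambda-1)C^{(\lambda)}_{n-1}(x)$. $(a)_n$ is the Pochhammer symbol ($(a)_0=1$). The left-hand convolution is a polynomial of degree at most $M+n+1$, so $R^{(\lambda)}_{k,n}=0$ for $k>M+n+1$; $R^{(\lambda)}$ is the Gegenbauer convolution matrix of $f_M$. *)

theory Defs
  imports "HOL-Analysis.Analysis"
begin

text \<open>Gegenbauer polynomials via the three-term recurrence
  (n+1) C_{n+1}(x) = 2(n+lambda) x C_n(x) - (n + 2 lambda - 1) C_{n-1}(x), C_{-1} = 0, C_0 = 1.\<close>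
fun gegen_pair :: "real \<Rightarrow> nat \<Rightarrow> real \<Rightarrow> real \<times> real" where
  "gegen_pair lam 0 x = (0, 1)"
| "gegen_pair lam (Suc n) x =
     (let (cm1, c) = gegen_pair lam n x
      in (c, (2 * (real n + lam) * x * c - (real n + 2 * lam - 1) * cm1) / (real n + 1)))"

definition gegenbauer :: "real \<Rightarrow> nat \<Rightarrow> real \<Rightarrow> real" where
  "gegenbauer lam n x = snd (gegen_pair lam n x)"

definition gegen_series :: "real \<Rightarrow> (nat \<Rightarrow> real) \<Rightarrow> nat \<Rightarrow> real \<Rightarrow> real" where
  "gegen_series lam a M x = (\<Sum>m\<le>M. a m * gegenbauer lam m x)"

definition gegen_S :: "real \<Rightarrow> nat \<Rightarrow> real" where
  "gegen_S lam n = 2 * (-1) ^ (n + 1) * (lam + real n) * pochhammer (2 * lam - 1) n / fact (n + 1)"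

end

theory Submission
  imports Defs "HOL-Computational_Algebra.Polynomial"
begin

lemma gegen_pair_fst: "fst (gegen_pair lam (Suc n) x) = gegenbauer lam n x"
  by (simp add: gegenbauer_def split: prod.splits)

lemma gegen_pair_Suc: "gegen_pair lam (Suc n) x = (gegenbauer lam n x, gegenbauer lam (Suc n) x)"
  by (metis gegen_pair_fst gegenbauer_def prod.collapse)

lemma gegen_0[simp]: "gegenbauer lam 0 x = 1"
  by (simp add: gegenbauer_def)

lemma gegen_1[simp]: "gegenbauer lam (Suc 0) x = 2 * lam * x"
  by (simp add: gegenbauer_def)

lemma gegen_SS: "gegenbauer lam (Suc (Suc n)) x =
   (2 * (real n + 1 + lam) * x * gegenbauer lam (Suc n) x - (real n + 2 * lam) * gegenbauer lam n x) / (real n + 2)"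
proof -
  have "gegenbauer lam (Suc (Suc n)) x = snd (gegen_pair lam (Suc (Suc n)) x)" by (simp add: gegenbauer_def)
  also have "\<dots> = (2 * (real (Suc n) + lam) * x * gegenbauer lam (Suc n) x - (real (Suc n) + 2 * lam - 1) * gegenbauer lam n x) / (real (Suc n) + 1)"
    by (subst gegen_pair.simps(2), subst gegen_pair_Suc) simp
  finally show ?thesis by (simp add: algebra_simps)
qed

fun gp :: "real \<Rightarrow> nat \<Rightarrow> real poly" where
  "gp lam 0 = 1"
| "gp lam (Suc 0) = [:0, 2*lam:]"
| "gp lam (Suc (Suc n)) = smult (1/(real n + 2))
     (smult (2*(real n + 1 + lam)) (pCons 0 (gp lam (Suc n))) - smult (real n + 2*lam) (gp lam n))"

declare gp.simps(3)[simp del]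

lemma alg_b: fixes D2 D1 D0 Dm P2 P1 P0 x l :: real and n :: nat
  assumes "D2 = 2*(real n+1+l)*P1 + D0" "x*D0 - Dm = real n*P0" "D1 = 2*(real n+l)*P0 + Dm"
    "(real n+2)*P2 = 2*(real n+1+l)*x*P1 - (real n+2*l)*P0"
  shows "x*D2 - D1 = real (Suc (Suc n))*P2"
proof -
  have "x*D2 - D1 = 2*(real n+1+l)*x*P1 + (x*D0 - Dm) - 2*(real n+l)*P0"
    using assms(1,3) by (simp add: algebra_simps)
  also have "\<dots> = (real n+2)*P2" using assms(2,4) by (simp add: algebra_simps)
  finally show ?thesis by simp
qed

definition pm1 :: "real \<Rightarrow> nat \<Rightarrow> real poly" where
  "pm1 lam k = (case k of 0 \<Rightarrow> 0 | Suc j \<Rightarrow> gp lam j)"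

lemma pm1_simps[simp]: "pm1 lam 0 = 0" "pm1 lam (Suc j) = gp lam j"
  by (simp_all add: pm1_def)

lemma poly_gp[simp]: "poly (gp lam n) x = gegenbauer lam n x"
  by (induction lam n rule: gp.induct) (simp_all add: gegen_SS gp.simps(3) field_simps)

lemma gp_SS_pt: "(real n + 2) * poly (gp lam (Suc (Suc n))) x
   = 2*(real n + 1 + lam) * x * poly (gp lam (Suc n)) x - (real n + 2*lam) * poly (gp lam n) x"
  by (simp add: gegen_SS field_simps)

lemma gp_SS_deriv_pt: "(real n + 2) * poly (pderiv (gp lam (Suc (Suc n)))) x
   = 2*(real n + 1 + lam) * (poly (gp lam (Suc n)) x + x * poly (pderiv (gp lam (Suc n))) x)
     - (real n + 2*lam) * poly (pderiv (gp lam n)) x"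
proof -
  have g: "\<And>c d e P Q. poly (pderiv (smult c (smult d (pCons 0 P) - smult e Q))) x = c*(d*(poly P x + x*poly (pderiv P) x) - e*poly (pderiv Q) x)"
    by (simp add: pderiv_smult pderiv_diff pderiv_pCons algebra_simps)
  show ?thesis by (simp only: gp.simps g) (simp add: field_simps)
qed

definition bprop where "bprop lam n \<longleftrightarrow> (\<forall>x. x * poly (pderiv (gp lam n)) x - poly (pderiv (pm1 lam n)) x = real n * poly (gp lam n) x)"
definition aprop where "aprop lam n \<longleftrightarrow> (\<forall>x. poly (pderiv (gp lam (Suc n))) x = 2*(real n+lam) * poly (gp lam n) x + poly (pderiv (pm1 lam n)) x)"

lemma a_from_b: "bprop lam n \<Longrightarrow> aprop lam n"
proof (cases n)
  case 0 then show ?thesis by (simp add: aprop_def pderiv_pCons)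
next
  case (Suc m)
  assume b: "bprop lam n"
  show ?thesis unfolding aprop_def
  proof
    fix x
    have 1: "(real m + 2) * poly (pderiv (gp lam (Suc (Suc m)))) x
   = 2*(real m + 1 + lam) * (poly (gp lam (Suc m)) x + x * poly (pderiv (gp lam (Suc m))) x)
     - (real m + 2*lam) * poly (pderiv (gp lam m)) x" by (rule gp_SS_deriv_pt)
    have 2: "x * poly (pderiv (gp lam (Suc m))) x = poly (pderiv (gp lam m)) x + (real m + 1) * poly (gp lam (Suc m)) x"
      using b Suc by (simp add: bprop_def algebra_simps)
    have "(real m + 2) * poly (pderiv (gp lam (Suc (Suc m)))) x
        = (real m + 2) * (2*(real m + 1 + lam) * poly (gp lam (Suc m)) x + poly (pderiv (gp lam m)) x)"
      unfolding 1 2 by (simp add: algebra_simps)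
    then have "poly (pderiv (gp lam (Suc (Suc m)))) x = 2*(real m + 1 + lam) * poly (gp lam (Suc m)) x + poly (pderiv (gp lam m)) x"
      by (metis add_nonneg_pos mult_cancel_left of_nat_0_le_iff zero_less_numeral not_less_iff_gr_or_eq)
    then show "poly (pderiv (gp lam (Suc n))) x = 2*(real n+lam) * poly (gp lam n) x + poly (pderiv (pm1 lam n)) x"
      using Suc by (simp add: algebra_simps)
  qed
qed

lemma b_all: "bprop lam n"
proof (induction lam n rule: gp.induct)
  case (1 lam) then show ?case by (simp add: bprop_def)
next
  case (2 lam) then show ?case by (simp add: bprop_def pderiv_pCons)
next
  case (3 lam n)
  have a1: "aprop lam (Suc n)" using 3 a_from_b by blast
  have a0: "aprop lam n" using 3 a_from_b by blast
  show ?case unfolding bprop_def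
  proof
    fix x
    have e1: "poly (pderiv (gp lam (Suc (Suc n)))) x = 2*(real n + 1 +lam) * poly (gp lam (Suc n)) x + poly (pderiv (gp lam n)) x"
      using a1 by (simp add: aprop_def algebra_simps)
    have e0: "x * poly (pderiv (gp lam n)) x - poly (pderiv (pm1 lam n)) x = real n * poly (gp lam n) x"
      using 3(2) by (simp add: bprop_def)
    have e2: "poly (pderiv (gp lam (Suc n))) x = 2*(real n+lam) * poly (gp lam n) x + poly (pderiv (pm1 lam n)) x"
      using a0 by (simp add: aprop_def)
    note e3 = gp_SS_pt[of n lam x]
    show "x * poly (pderiv (gp lam (Suc (Suc n)))) x - poly (pderiv (pm1 lam (Suc (Suc n)))) x = real (Suc (Suc n)) * poly (gp lam (Suc (Suc n))) x"
      using alg_b[OF e1 e0 e2 e3] by (simp add: algebra_simps)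
  qed
qed

lemma gp_deriv: "pderiv (gp lam (Suc n)) - pderiv (pm1 lam n) = smult (2*(real n+lam)) (gp lam n)"
  using a_from_b[OF b_all[of lam n]]
  by (subst poly_eq_poly_eq_iff[symmetric]) (auto simp: aprop_def algebra_simps)

lemma gp_deg: assumes "lam > -1/2" "lam \<noteq> 0"
  shows "degree (gp lam n) \<le> n \<and> coeff (gp lam n) n \<noteq> 0"
proof (induction n rule: nat_less_induct)
  case (1 n)
  show ?case
  proof (cases n)
    case 0 then show ?thesis by simp
  next
    case (Suc m) note m = this
    show ?thesis
    proof (cases m)
      case 0 then show ?thesis using Suc assms by simp
    next
      case (Suc k)
      have n: "n = Suc (Suc k)" using m Suc by simp
      have IH1: "degree (gp lam (Suc k)) \<le> Suc k" "coeff (gp lam (Suc k)) (Suc k) \<noteq> 0" using 1 n by auto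
      have IH0: "degree (gp lam k) \<le> k" using 1 n by auto
      have d1: "degree (smult (2*(real k + 1 + lam)) (pCons 0 (gp lam (Suc k)))) \<le> n"
        using IH1(1) n degree_pCons_le[of 0 "gp lam (Suc k)"] by (meson degree_smult_le le_SucI not_less_eq_eq order.trans)
      have d2: "degree (smult (real k + 2*lam) (gp lam k)) \<le> n"
        using IH0 n degree_smult_le by (metis le_SucI order.trans)
      have d: "degree (gp lam n) \<le> n" unfolding n gp.simps
        using d1 d2 degree_diff_le degree_smult_le n by (metis order.trans)
      have z: "coeff (gp lam k) (Suc (Suc k)) = 0" using IH0 by (simp add: coeff_eq_0)
      have pos: "2 * (real k + 1 + lam) \<noteq> 0" using assms by simp
      have "coeff (gp lam n) n = (1/(real k + 2)) * (2 * (real k + 1 + lam) * coeff (gp lam (Suc k)) (Suc k))"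
        unfolding n gp.simps by (simp add: z)
      also have "\<dots> \<noteq> 0" using pos IH1(2) by (simp add: add_nonneg_pos)
      finally show ?thesis using d by simp
    qed
  qed
qed

lemma gp_sum_zero: assumes "lam > -1/2" "lam \<noteq> 0"
  shows "(\<Sum>k\<le>L. smult (c k) (gp lam k)) = 0 \<Longrightarrow> \<forall>k\<le>L. c k = 0"
proof (induction L)
  case 0 then show ?case using gp_deg[OF assms, of 0] by simp
next
  case (Suc L)
  have "coeff (\<Sum>k\<le>Suc L. smult (c k) (gp lam k)) (Suc L) = (\<Sum>k\<le>Suc L. c k * coeff (gp lam k) (Suc L))"
    by (simp add: coeff_sum)
  also have "\<dots> = c (Suc L) * coeff (gp lam (Suc L)) (Suc L)"
  proof -
    have "coeff (gp lam k) (Suc L) = 0" if "k \<le> L" for k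
      using gp_deg[OF assms, of k] that by (intro coeff_eq_0) linarith
    then show ?thesis by simp
  qed
  finally have eq: "coeff (\<Sum>k\<le>Suc L. smult (c k) (gp lam k)) (Suc L) = c (Suc L) * coeff (gp lam (Suc L)) (Suc L)" .
  then have "coeff 0 (Suc L) = c (Suc L) * coeff (gp lam (Suc L)) (Suc L)" unfolding Suc.prems .
  then have "c (Suc L) = 0" using gp_deg[OF assms, of "Suc L"] by simp
  then have "(\<Sum>k\<le>L. smult (c k) (gp lam k)) = 0" using Suc.prems by (simp del: sum.atMost_Suc add: sum.atMost_Suc[of _ L])
  then show ?case using Suc.IH \<open>c (Suc L) = 0\<close> le_Suc_eq by auto
qed

lemma gegen_unique: assumes "lam > -1/2" "lam \<noteq> 0"
  and h: "\<And>y. y \<in> {-1..1} \<Longrightarrow> (\<Sum>k\<le>L. c k * gegenbauer lam k y) = 0"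
  shows "\<forall>k\<le>L. c k = 0"
proof -
  let ?P = "\<Sum>k\<le>L. smult (c k) (gp lam k)"
  have pv: "poly ?P y = (\<Sum>k\<le>L. c k * gegenbauer lam k y)" for y by (simp add: poly_sum)
  have "?P = 0"
  proof (rule ccontr)
    assume "?P \<noteq> 0"
    then have "finite {x. poly ?P x = 0}" by (rule poly_roots_finite)
    moreover have "{-1..1::real} \<subseteq> {x. poly ?P x = 0}" using h pv by auto
    ultimately have "finite {-1..1::real}" by (rule finite_subset[rotated])
    then show False using infinite_Icc[of "-1::real" 1] by simp
  qed
  then show ?thesis using gp_sum_zero[OF assms(1,2)] by blast
qed

definition cv :: "real poly \<Rightarrow> (real \<Rightarrow> real) \<Rightarrow> real \<Rightarrow> real" where
  "cv g h y = integral {-1..y} (\<lambda>t. poly g (y-1-t) * h t)"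

lemma cont_sub: fixes h :: "real \<Rightarrow> real" shows "continuous_on {-1..1} h \<Longrightarrow> y \<le> 1 \<Longrightarrow> continuous_on {-1..y} h"
  by (rule continuous_on_subset) auto

lemma intg_pg: fixes h :: "real \<Rightarrow> real" assumes "continuous_on {-1..1} h" "y \<le> 1"
  shows "(\<lambda>t. poly q (y-1-t) * h t) integrable_on {-1..y}"
proof -
  have "continuous_on {-1..y} h" by (rule cont_sub[OF assms])
  then show ?thesis by (intro integrable_continuous_real continuous_intros)
qed

lemma cv_pCons: assumes h: "continuous_on {-1..1} h" and y: "y \<le> 1"
  shows "cv (pCons c q) h y = c * integral {-1..y} h + y * cv q h y - cv q (\<lambda>t. (1+t) * h t) y"
proof -
  have h1: "continuous_on {-1..1} (\<lambda>t. (1+t) * h t)" by (intro continuous_intros h)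
  have i1: "h integrable_on {-1..y}" by (rule integrable_continuous_real) (rule cont_sub[OF h y])
  have eq: "(\<lambda>t. poly (pCons c q) (y-1-t) * h t) = (\<lambda>t. (c * h t + y * (poly q (y-1-t) * h t)) - poly q (y-1-t) * ((1+t) * h t))"
    by (auto simp: algebra_simps)
  have i2: "(\<lambda>t. poly q (y-1-t) * h t) integrable_on {-1..y}" by (rule intg_pg[OF h y])
  have i3: "(\<lambda>t. poly q (y-1-t) * ((1+t) * h t)) integrable_on {-1..y}" by (rule intg_pg[OF h1 y])
  have hy: "continuous_on {-1..y} h" by (rule cont_sub[OF h y])
  have i4: "(\<lambda>t. c * h t + y * (poly q (y-1-t) * h t)) integrable_on {-1..y}"
    by (intro integrable_continuous_real continuous_intros hy)
  have i5: "(\<lambda>t. c * h t) integrable_on {-1..y}"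
    by (intro integrable_continuous_real continuous_intros hy)
  have i6: "(\<lambda>t. y * (poly q (y-1-t) * h t)) integrable_on {-1..y}"
    by (intro integrable_continuous_real continuous_intros hy)
  have "integral {-1..y} (\<lambda>t. (c * h t + y * (poly q (y-1-t) * h t)) - poly q (y-1-t) * ((1+t) * h t))
     = integral {-1..y} (\<lambda>t. c * h t + y * (poly q (y-1-t) * h t)) - integral {-1..y} (\<lambda>t. poly q (y-1-t) * ((1+t) * h t))"
    using i4 i3 by (rule integral_diff)
  also have "integral {-1..y} (\<lambda>t. c * h t + y * (poly q (y-1-t) * h t)) = integral {-1..y} (\<lambda>t. c * h t) + integral {-1..y} (\<lambda>t. y * (poly q (y-1-t) * h t))"
    using i5 i6 by (rule integral_add)
  finally show ?thesis unfolding cv_def eq by simp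
qed

lemma cv_pCons0: assumes h: "continuous_on {-1..1} h" and y: "y \<le> 1"
  shows "cv (pCons 0 q) h y = y * cv q h y - cv q (\<lambda>t. (1+t) * h t) y"
  using cv_pCons[OF h y, of 0 q] by simp

lemma cv_add: assumes h: "continuous_on {-1..1} h" and y: "y \<le> 1"
  shows "cv (p + q) h y = cv p h y + cv q h y"
  unfolding cv_def by (simp add: distrib_right integral_add intg_pg[OF h y])

lemma cv_deriv:
  assumes "continuous_on {-1..1} h" "y \<in> {-1..1}"
  shows "(cv g h has_real_derivative (poly g (-1) * h y + cv (pderiv g) h y)) (at y within {-1..1})"
  using assms
proof (induction g arbitrary: h y rule: pCons_induct)
  case 0
  then show ?case by (simp add: cv_def)
next
  case (pCons c q)
  note h = pCons.prems(1) and y = pCons.prems(2)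
  define h1 where "h1 = (\<lambda>t. (1+t) * h t)"
  have h1c: "continuous_on {-1..1} h1" unfolding h1_def by (intro continuous_intros h)
  have D1: "((\<lambda>y. integral {-1..y} h) has_real_derivative h y) (at y within {-1..1})"
    by (rule integral_has_real_derivative[OF h y])
  have D2: "(cv q h has_real_derivative (poly q (-1) * h y + cv (pderiv q) h y)) (at y within {-1..1})"
    by (rule pCons.IH[OF h y])
  have D3: "(cv q h1 has_real_derivative (poly q (-1) * h1 y + cv (pderiv q) h1 y)) (at y within {-1..1})"
    by (rule pCons.IH[OF h1c y])
  have D: "((\<lambda>y. c * integral {-1..y} h + y * cv q h y - cv q h1 y) has_real_derivative
      (c * h y + (y * (poly q (-1) * h y + cv (pderiv q) h y) + cv q h y) - (poly q (-1) * h1 y + cv (pderiv q) h1 y)))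
      (at y within {-1..1})"
    by (intro DERIV_diff DERIV_add DERIV_cmult D1 D3 DERIV_mult'[OF DERIV_ident D2, simplified])
  have val: "c * h y + (y * (poly q (-1) * h y + cv (pderiv q) h y) + cv q h y) - (poly q (-1) * h1 y + cv (pderiv q) h1 y)
     = poly (pCons c q) (-1) * h y + cv (pderiv (pCons c q)) h y"
  proof -
    have "cv (pderiv (pCons c q)) h y = cv q h y + (y * cv (pderiv q) h y - cv (pderiv q) h1 y)"
      unfolding pderiv_pCons using y cv_add[OF h] cv_pCons0[OF h, of y "pderiv q"] h1_def by auto
    then show ?thesis by (simp add: h1_def algebra_simps)
  qed
  show ?case
    apply (rule has_field_derivative_transform_within[OF D[unfolded val], of 1])
    using y cv_pCons[OF h] h1_def by auto
qed

lemma shift_sum: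
  "(\<Sum>m\<le>U. b m * (gegenbauer lam (Suc m) y - poly (pm1 lam m) y))
   = (\<Sum>k\<le>U. ((if k = 0 then 0 else b (k-1)) - b (Suc k)) * gegenbauer lam k y)
     + b U * gegenbauer lam (Suc U) y + b (Suc U) * gegenbauer lam U y"
proof (induction U)
  case 0 then show ?case by (simp add: algebra_simps)
next
  case (Suc U)
  show ?case using Suc by (simp add: algebra_simps)
qed

lemma G_rec: "fact (Suc (Suc n)) * gegenbauer lam (Suc (Suc n)) (-1) =
   -2*(real n+1+lam) * (fact (Suc n) * gegenbauer lam (Suc n) (-1)) - (real n+1)*(real n+2*lam) * (fact n * gegenbauer lam n (-1))"
proof -
  have e: "(real n + 2) * gegenbauer lam (Suc (Suc n)) (-1) = 2*(real n + 1 + lam) * (-1) * gegenbauer lam (Suc n) (-1) - (real n + 2*lam) * gegenbauer lam n (-1)"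
    using gp_SS_pt[of n lam "-1"] by simp
  have f2: "(fact (Suc (Suc n)) :: real) = (real n+2)*((real n+1)*fact n)" by (simp add: fact_Suc algebra_simps)
  have f1: "(fact (Suc n) :: real) = (real n+1)*fact n" by (simp add: fact_Suc algebra_simps)
  show ?thesis using e unfolding f1 f2 by algebra
qed

lemma G_val: "fact k * gegenbauer lam k (-1) = (-1)^k * pochhammer (2*lam) k"
proof (induction k rule: less_induct)
  case (less k)
  show ?case
  proof (cases k)
    case 0 then show ?thesis by simp
  next
    case (Suc m)
    show ?thesis
    proof (cases m)
      case 0 then show ?thesis using Suc by simp
    next
      case (Suc n)
      have k: "k = Suc (Suc n)" using Suc \<open>k = Suc m\<close> by simp
      have i1: "fact (Suc n) * gegenbauer lam (Suc n) (-1) = (-1)^(Suc n) * pochhammer (2*lam) (Suc n)"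
        using less.IH[of "Suc n"] k by simp
      have i0: "fact n * gegenbauer lam n (-1) = (-1)^n * pochhammer (2*lam) n"
        using less.IH[of n] k by simp
      have P1: "pochhammer (2*lam) (Suc n) = pochhammer (2*lam) n*(2*lam+real n)"
        by (simp add: pochhammer_Suc)
      have P2: "pochhammer (2*lam) (Suc (Suc n)) = pochhammer (2*lam) n*(2*lam+real n)*(2*lam+real n+1)"
        by (simp add: pochhammer_Suc algebra_simps)
      have S1: "((-1)^(Suc n) :: real) = -((-1)^n)" by simp
      have S2: "((-1)^(Suc (Suc n)) :: real) = (-1)^n" by simp
      show ?thesis unfolding k G_rec i1 i0 P1 P2 S1 S2 by algebra
    qed
  qed
qed

lemma gegen_m1: "gegenbauer lam k (-1) = (-1)^k * pochhammer (2*lam) k / fact k"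
  using G_val[of k lam] by (simp add: field_simps)

lemma gegen_S_eq: "gegen_S lam n = gegenbauer lam (Suc n) (-1) - poly (pm1 lam n) (-1)"
proof (cases n)
  case 0 then show ?thesis by (simp add: gegen_S_def)
next
  case (Suc m)
  have fz: "(fact (Suc (Suc m)) :: real) \<noteq> 0" by simp
  have f2: "(fact (Suc (Suc m)) :: real) = (real m+2)*((real m+1)*fact m)" by (simp add: fact_Suc algebra_simps)
  have Pm: "pochhammer (2*lam-1) (Suc m) = (2*lam-1)*pochhammer (2*lam) m"
    by (simp add: pochhammer_rec)
  have P2: "pochhammer (2*lam) (Suc (Suc m)) = pochhammer (2*lam) m*(2*lam+real m)*(2*lam+real m+1)"
    by (simp add: pochhammer_Suc algebra_simps)
  have l: "fact (Suc (Suc m)) * gegen_S lam (Suc m) = 2 * (-1)^m * (lam + real m + 1) * ((2*lam-1)*pochhammer (2*lam) m)"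
    unfolding gegen_S_def Pm Suc_eq_plus1[symmetric] using fz by simp
  have r: "fact (Suc (Suc m)) * (gegenbauer lam (Suc (Suc m)) (-1) - gegenbauer lam m (-1))
     = (-1)^m * pochhammer (2*lam) (Suc (Suc m)) - (real m+2)*(real m+1) * ((-1)^m * pochhammer (2*lam) m)"
  proof -
    have "fact (Suc (Suc m)) * (gegenbauer lam (Suc (Suc m)) (-1) - gegenbauer lam m (-1))
      = fact (Suc (Suc m)) * gegenbauer lam (Suc (Suc m)) (-1) - (real m+2)*(real m+1) * (fact m * gegenbauer lam m (-1))"
      unfolding f2 by (simp add: algebra_simps)
    then show ?thesis unfolding G_val by simp
  qed
  have "fact (Suc (Suc m)) * gegen_S lam (Suc m) = fact (Suc (Suc m)) * (gegenbauer lam (Suc (Suc m)) (-1) - gegenbauer lam m (-1))"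
    unfolding l r P2 by algebra
  then show ?thesis using fz Suc by simp
qed

lemma sum_extend: fixes g :: "nat \<Rightarrow> real"
  assumes "\<And>m. M < m \<Longrightarrow> g m = 0" "M \<le> K"
  shows "(\<Sum>m\<le>K. g m) = (\<Sum>m\<le>M. g m)"
  by (rule sum.mono_neutral_right) (use assms in auto)

lemma sum_if0: "(\<Sum>k\<le>(L::nat). (if k = 0 then c else 0) * (X k::real)) = c * X 0"
proof -
  have "(\<Sum>k\<le>L. (if k = 0 then c else 0) * X k) = (\<Sum>k\<le>L. (if k = 0 then c * X k else 0))"
    by (rule sum.cong) auto
  then show ?thesis by simp
qed

definition pcv :: "real poly \<Rightarrow> real poly \<Rightarrow> real \<Rightarrow> real" where
  "pcv A B y = integral {-1..y} (\<lambda>t. poly A (y-1-t) * poly B t)"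

lemma pcv_cv: "pcv A B y = cv A (poly B) y" by (simp add: pcv_def cv_def)

lemma cont_polyB: "continuous_on S (poly (B::real poly))"
  using continuous_on_poly[OF continuous_on_id, of S B] by simp

lemma pcv_intg: "(\<lambda>t. poly A ((y::real)-1-t) * poly B t) integrable_on {-1..y}"
proof -
  have "continuous_on {-1..y} (\<lambda>t. poly A (y-1-t) * poly B t)"
    by (intro continuous_on_mult continuous_on_poly continuous_intros)
  then show ?thesis by (rule integrable_continuous_real)
qed

lemma pcv_diff2: "pcv A (B - B') y = pcv A B y - pcv A B' y"
  unfolding pcv_def by (simp add: right_diff_distrib integral_diff pcv_intg)

lemma pcv_smult2: "pcv A (smult c B) y = c * pcv A B y"
  unfolding pcv_def by (simp add: mult.left_commute)

lemma pcv_zero2[simp]: "pcv A 0 y = 0"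
  unfolding pcv_def by simp

lemma pcv_m1[simp]: "pcv A B (-1) = 0"
  unfolding pcv_def by simp

lemma ibp: fixes P Q :: "real poly" assumes "-1 \<le> y"
  shows "pcv (pderiv P) Q y - pcv P (pderiv Q) y = poly P y * poly Q (-1) - poly P (-1) * poly Q y"
proof -
  have d: "((\<lambda>t. -(poly P (y-1-t) * poly Q t)) has_vector_derivative
      (poly (pderiv P) (y-1-t) * poly Q t - poly P (y-1-t) * poly (pderiv Q) t)) (at t within {-1..y})" for t
  proof -
    have inner: "((\<lambda>t. y-1-t) has_real_derivative -1) (at t within {-1..y})"
      by (auto intro!: derivative_eq_intros)
    have d1: "((\<lambda>t. poly P (y-1-t)) has_real_derivative poly (pderiv P) (y-1-t) * -1) (at t within {-1..y})"
      by (rule DERIV_chain2[OF poly_DERIV inner])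
    have d2: "(poly Q has_real_derivative poly (pderiv Q) t) (at t within {-1..y})"
      by (rule has_field_derivative_at_within) simp
    have "((\<lambda>t. -(poly P (y-1-t) * poly Q t)) has_real_derivative
      (poly (pderiv P) (y-1-t) * poly Q t - poly P (y-1-t) * poly (pderiv Q) t)) (at t within {-1..y})"
      by (rule DERIV_cong[OF DERIV_minus[OF DERIV_mult'[OF d1 d2]]]) (simp add: algebra_simps)
    then show ?thesis by (simp add: has_real_derivative_iff_has_vector_derivative)
  qed
  have "((\<lambda>t. poly (pderiv P) (y-1-t) * poly Q t - poly P (y-1-t) * poly (pderiv Q) t) has_integral
     (-(poly P (y-1-y) * poly Q y) - -(poly P (y-1-(-1)) * poly Q (-1)))) {-1..y}"
    by (rule fundamental_theorem_of_calculus[OF assms d])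
  then have "integral {-1..y} (\<lambda>t. poly (pderiv P) (y-1-t) * poly Q t - poly P (y-1-t) * poly (pderiv Q) t)
     = poly P y * poly Q (-1) - poly P (-1) * poly Q y"
    by (simp add: integral_unique algebra_simps)
  then show ?thesis unfolding pcv_def by (simp add: integral_diff pcv_intg)
qed

lemma lin5: fixes A B D E X :: "nat \<Rightarrow> real"
  shows "(\<Sum>k\<le>L. (A k - B k - S * D k - E k + (if k = 0 then c else 0)) * X k)
    = (\<Sum>k\<le>L. A k * X k) - (\<Sum>k\<le>L. B k * X k) - S * (\<Sum>k\<le>L. D k * X k) - (\<Sum>k\<le>L. E k * X k) + c * X 0"
proof -
  have "(\<Sum>k\<le>L. (A k - B k - S * D k - E k + (if k = 0 then c else 0)) * X k)
    = (\<Sum>k\<le>L. A k * X k - B k * X k - S * (D k * X k) - E k * X k + (if k = 0 then c else 0) * X k)"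
    by (rule sum.cong) (auto simp: algebra_simps)
  also have "\<dots> = (\<Sum>k\<le>L. A k * X k) - (\<Sum>k\<le>L. B k * X k) - S * (\<Sum>k\<le>L. D k * X k) - (\<Sum>k\<le>L. E k * X k) + (\<Sum>k\<le>L. (if k = 0 then c else 0) * X k)"
    by (simp add: sum.distrib sum_subtractf sum_distrib_left)
  finally show ?thesis by (simp only: sum_if0)
qed

lemma pderiv_sum_atMost: "pderiv (\<Sum>k\<le>(L::nat). f k) = (\<Sum>k\<le>L. pderiv (f k))"
  by (induction L) (simp_all add: pderiv_add)

theorem theorem4p3:
  fixes lam :: real and M N :: nat and a :: "nat \<Rightarrow> real" and R :: "nat \<Rightarrow> nat \<Rightarrow> real"
  assumes lam_gt: "lam > -1/2" and lam_ne: "lam \<noteq> 0"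
    and a_zero: "a (M + 1) = 0" "a (M + 2) = 0"
    and expansion: "\<And>n y. n \<le> N \<Longrightarrow> y \<in> {-1..1} \<Longrightarrow>
        integral {-1..y} (\<lambda>t. gegen_series lam a M (y - 1 - t) * gegenbauer lam n t)
          = (\<Sum>k\<le>M + N + 1. R k n * gegenbauer lam k y)"
    and R_top: "\<And>n. R (M + N + 2) n = 0"
  shows "(\<forall>k. M + 1 < k \<and> k \<le> M + N + 2 \<longrightarrow> R k 0 = 0)
    \<and> (\<forall>k. 1 \<le> k \<and> k \<le> M + 1 \<longrightarrow>
          R k 0 = a (k - 1) / (2 * (real k + lam - 1)) - a (k + 1) / (2 * (real k + lam + 1)))
    \<and> R 0 0 = (\<Sum>j = 1..M + 1. (-1) ^ (j + 1) * pochhammer (2 * lam) j / fact j * R j 0)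
    \<and> (\<forall>n k. n + 1 \<le> N \<and> 1 \<le> k \<and> k \<le> M + N \<longrightarrow>
          R k (n + 1) = gegen_S lam n * R k 0 + (if n = 0 then 0 else R k (n - 1))
             + (real n + lam) / (real k + lam - 1) * R (k - 1) n
             - (real n + lam) / (real k + lam + 1) * R (k + 1) n)"
proof -
  define K where "K = M + N + 1"
  have SK: "M + N + 2 = Suc K" by (simp add: K_def)
  define fpoly where "fpoly = (\<Sum>m\<le>M. smult (a m) (gp lam m))"
  have fpoly_eq: "\<And>x. poly fpoly x = gegen_series lam a M x"
    by (simp add: fpoly_def gegen_series_def poly_sum)
  have klam: "real k + lam \<noteq> 0" for k
    using lam_gt lam_ne by (cases k) auto
  define ep where "ep = (\<lambda>k. smult (1/(2*(real k+lam))) (gp lam (Suc k) - pm1 lam k))"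
  have ep_deriv: "pderiv (ep k) = gp lam k" for k
    using gp_deriv[of lam k] klam[of k] by (simp add: ep_def pderiv_smult pderiv_diff)
  have ep_poly: "poly (ep k) y = (gegenbauer lam (Suc k) y - poly (pm1 lam k) y) / (2*(real k+lam))" for k y
    by (simp add: ep_def)
  define Phi where "Phi = (\<Sum>m\<le>M. smult (a m) (ep m))"
  have Phi_deriv: "pderiv Phi = fpoly"
    by (simp add: Phi_def fpoly_def pderiv_sum_atMost pderiv_smult ep_deriv)
  define Fint where "Fint = Phi - [:poly Phi (-1):]"
  have Fint_m1: "poly Fint (-1) = 0" by (simp add: Fint_def)
  have Fint_deriv: "pderiv Fint = fpoly" by (simp add: Fint_def pderiv_diff Phi_deriv pderiv_pCons)
  define F where "F = (\<lambda>n y. pcv fpoly (gp lam n) y)"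
  have exp1: "F n y = (\<Sum>k\<le>K. R k n * gegenbauer lam k y)" if "n \<le> N" "y \<in> {-1..1}" for n y
    using expansion[OF that] by (simp add: F_def pcv_def fpoly_eq K_def)
  have exp2: "F n y = (\<Sum>k\<le>Suc K. R k n * gegenbauer lam k y)" if "n \<le> N" "y \<in> {-1..1}" for n y
    using exp1[OF that] R_top[of n] SK by simp
  have F0: "F 0 y = poly Fint y" if "y \<in> {-1..1}" for y
  proof -
    have "pcv (pderiv Fint) 1 y - pcv Fint (pderiv 1) y = poly Fint y * poly 1 (-1) - poly Fint (-1) * poly 1 y"
      by (rule ibp) (use that in auto)
    then show ?thesis by (simp add: F_def Fint_deriv Fint_m1)
  qed
  have stepD: "pcv Fint (gp lam n) y = (\<Sum>k\<le>K. R k n * (poly (ep k) y - poly (ep k) (-1)))"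
    if n: "n \<le> N" and y: "y \<in> {-1..1}" for n y
  proof -
    define E where "E = (\<Sum>k\<le>K. smult (R k n) (ep k))"
    have cont: "continuous_on {-1..1} (poly (gp lam n))" by (intro continuous_intros)
    have dz: "((\<lambda>x. pcv Fint (gp lam n) x - poly E x) has_real_derivative 0) (at x within {-1..1})"
      if x: "x \<in> {-1..1}" for x
    proof -
      have d1: "((\<lambda>x. pcv Fint (gp lam n) x) has_real_derivative (poly Fint (-1) * poly (gp lam n) x + cv (pderiv Fint) (poly (gp lam n)) x)) (at x within {-1..1})"
        unfolding pcv_cv by (rule cv_deriv[OF cont x])
      have d2: "(poly E has_real_derivative poly (pderiv E) x) (at x within {-1..1})"
        by (rule has_field_derivative_at_within) simp
      have eq: "poly Fint (-1) * poly (gp lam n) x + cv (pderiv Fint) (poly (gp lam n)) x = poly (pderiv E) x"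
      proof -
        have "poly (pderiv E) x = (\<Sum>k\<le>K. R k n * gegenbauer lam k x)"
          by (simp add: E_def pderiv_sum_atMost pderiv_smult ep_deriv poly_sum)
        also have "\<dots> = F n x" using exp1[OF n x] by simp
        finally show ?thesis by (simp add: Fint_m1 Fint_deriv F_def pcv_cv)
      qed
      show ?thesis using DERIV_diff[OF d1 d2] eq by simp
    qed
    obtain c where c: "\<forall>x\<in>{-1..1}. pcv Fint (gp lam n) x - poly E x = c"
      using has_field_derivative_zero_constant[of "{-1..1::real}", OF _ dz] by auto
    have "c = - poly E (-1)" using c by force
    then have "pcv Fint (gp lam n) y = poly E y - poly E (-1)" using c y by force
    then show ?thesis by (simp add: E_def poly_sum sum_subtractf right_diff_distrib)
  qed
  have KM: "M < K" by (simp add: K_def)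
  define b where "b = (\<lambda>m. if m \<le> M then a m / (2*(real m + lam)) else 0)"
  have Phi_val: "poly Phi y = (\<Sum>k\<le>K. ((if k = 0 then 0 else b (k-1)) - b (Suc k)) * gegenbauer lam k y)" for y
  proof -
    have "poly Phi y = (\<Sum>m\<le>M. b m * (gegenbauer lam (Suc m) y - poly (pm1 lam m) y))"
      unfolding Phi_def poly_sum poly_smult by (rule sum.cong) (auto simp: b_def ep_poly)
    also have "\<dots> = (\<Sum>m\<le>K. b m * (gegenbauer lam (Suc m) y - poly (pm1 lam m) y))"
      by (rule sum_extend[symmetric]) (use KM in \<open>auto simp: b_def\<close>)
    also have "\<dots> = (\<Sum>k\<le>K. ((if k = 0 then 0 else b (k-1)) - b (Suc k)) * gegenbauer lam k y)"
      unfolding shift_sum using KM by (simp add: b_def)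
    finally show ?thesis .
  qed
  define cA where "cA = (\<lambda>k. R k 0 - 0 - 0 * 0 - ((if k = 0 then 0 else b (k-1)) - b (Suc k)) + (if k = 0 then poly Phi (-1) else 0))"
  have cA0: "\<forall>k\<le>K. cA k = 0"
  proof (rule gegen_unique[OF lam_gt lam_ne])
    fix y :: real assume y: "y \<in> {-1..1}"
    have "(\<Sum>k\<le>K. cA k * gegenbauer lam k y) = (\<Sum>k\<le>K. R k 0 * gegenbauer lam k y) - (\<Sum>k\<le>K. 0 * gegenbauer lam k y) - 0 * (\<Sum>k\<le>K. 0 * gegenbauer lam k y)
       - (\<Sum>k\<le>K. ((if k = 0 then 0 else b (k-1)) - b (Suc k)) * gegenbauer lam k y) + poly Phi (-1) * gegenbauer lam 0 y"
      unfolding cA_def by (rule lin5)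
    also have "\<dots> = 0"
      using exp1[of 0 y] y F0[OF y] Phi_val[of y] by (simp add: Fint_def)
    finally show "(\<Sum>k\<le>K. cA k * gegenbauer lam k y) = 0" .
  qed
  have RA: "R k 0 = b (k-1) - b (Suc k)" if "1 \<le> k" "k \<le> K" for k
    using cA0 that unfolding cA_def by auto
  have conj1: "\<forall>k. M + 1 < k \<and> k \<le> M + N + 2 \<longrightarrow> R k 0 = 0"
  proof (intro allI impI)
    fix k assume k: "M + 1 < k \<and> k \<le> M + N + 2"
    show "R k 0 = 0"
    proof (cases "k = M + N + 2")
      case True then show ?thesis using R_top by simp
    next
      case False
      then have "k \<le> K" using k by (simp add: K_def)
      moreover have "b (k-1) = 0" "b (Suc k) = 0" using k by (auto simp: b_def)
      ultimately show ?thesis using RA[of k] k by simp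
    qed
  qed
  have conj2: "\<forall>k. 1 \<le> k \<and> k \<le> M + 1 \<longrightarrow>
          R k 0 = a (k - 1) / (2 * (real k + lam - 1)) - a (k + 1) / (2 * (real k + lam + 1))"
  proof (intro allI impI)
    fix k assume k: "1 \<le> k \<and> k \<le> M + 1"
    have kK: "k \<le> K" using k by (simp add: K_def)
    have km: "k - 1 \<le> M" "real (k-1) = real k - 1" using k by (auto simp: of_nat_diff)
    have b1: "b (k-1) = a (k - 1) / (2 * (real k + lam - 1))"
      unfolding b_def using km by (simp add: algebra_simps)
    have b2: "b (Suc k) = a (k + 1) / (2 * (real k + lam + 1))"
    proof (cases "Suc k \<le> M")
      case True then show ?thesis by (simp add: b_def algebra_simps)
    next
      case False
      then have "k + 1 = M + 1 \<or> k + 1 = M + 2" using k by auto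
      then have "a (k+1) = 0" using a_zero by auto
      then show ?thesis using False by (simp add: b_def)
    qed
    show "R k 0 = a (k - 1) / (2 * (real k + lam - 1)) - a (k + 1) / (2 * (real k + lam + 1))"
      using RA[of k] k kK b1 b2 by simp
  qed
  have conj3: "R 0 0 = (\<Sum>j = 1..M + 1. (-1) ^ (j + 1) * pochhammer (2 * lam) j / fact j * R j 0)"
  proof -
    have "F 0 (-1) = 0" by (simp add: F_def)
    then have "(\<Sum>k\<le>K. R k 0 * gegenbauer lam k (-1)) = 0" using exp1[of 0 "-1"] by simp
    moreover have "(\<Sum>k\<le>K. R k 0 * gegenbauer lam k (-1)) = R 0 0 + (\<Sum>k=1..K. R k 0 * gegenbauer lam k (-1))"
    proof -
      have "{..K} = insert 0 {1..K}" by auto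
      then show ?thesis by simp
    qed
    moreover have "(\<Sum>k=1..K. R k 0 * gegenbauer lam k (-1)) = (\<Sum>k=1..M+1. R k 0 * gegenbauer lam k (-1))"
      by (rule sum.mono_neutral_right) (use conj1 in \<open>auto simp: K_def\<close>)
    ultimately have "R 0 0 = - (\<Sum>k=1..M+1. R k 0 * gegenbauer lam k (-1))" by linarith
    also have "\<dots> = (\<Sum>j = 1..M + 1. (-1) ^ (j + 1) * pochhammer (2 * lam) j / fact j * R j 0)"
      unfolding sum_negf[symmetric] by (rule sum.cong) (auto simp: gegen_m1)
    finally show ?thesis .
  qed
  have conj4: "R k (n + 1) = gegen_S lam n * R k 0 + (if n = 0 then 0 else R k (n - 1))
             + (real n + lam) / (real k + lam - 1) * R (k - 1) n
             - (real n + lam) / (real k + lam + 1) * R (k + 1) n"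
    if nk: "n + 1 \<le> N" "1 \<le> k" "k \<le> M + N" for n k
  proof -
    define \<beta> where "\<beta> = (\<lambda>k. (real n + lam) / (real k + lam) * R k n)"
    define bb where "bb = (\<lambda>k. if k \<le> K then \<beta> k else 0)"
    define cst where "cst = 2*(real n+lam) * (\<Sum>k\<le>K. R k n * poly (ep k) (-1))"
    define rp where "rp = (\<lambda>k. if n = 0 then 0 else R k (n-1))"
    have X: "2*(real n+lam) * pcv Fint (gp lam n) y =
       (\<Sum>k\<le>Suc K. ((if k = 0 then 0 else bb (k-1)) - bb (Suc k)) * gegenbauer lam k y) - cst"
      if y: "y \<in> {-1..1}" for y
    proof -
      have "2*(real n+lam) * pcv Fint (gp lam n) y = 2*(real n+lam) * (\<Sum>k\<le>K. R k n * poly (ep k) y) - cst"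
      proof -
        have sD: "pcv Fint (gp lam n) y = (\<Sum>k\<le>K. R k n * (poly (ep k) y - poly (ep k) (-1)))"
          using stepD[of n y] nk y by simp
        show ?thesis unfolding sD cst_def by (simp add: right_diff_distrib sum_subtractf)
      qed
      also have "2*(real n+lam) * (\<Sum>k\<le>K. R k n * poly (ep k) y) = (\<Sum>k\<le>K. \<beta> k * (gegenbauer lam (Suc k) y - poly (pm1 lam k) y))"
        unfolding sum_distrib_left
      proof (rule sum.cong)
        fix k assume "k \<in> {..K}"
        show "2*(real n+lam) * (R k n * poly (ep k) y) = \<beta> k * (gegenbauer lam (Suc k) y - poly (pm1 lam k) y)"
          unfolding ep_poly \<beta>_def using klam[of k] by (simp add: field_simps)
      qed simp
      also have "\<dots> = (\<Sum>k\<le>Suc K. bb k * (gegenbauer lam (Suc k) y - poly (pm1 lam k) y))"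
      proof -
        have "(\<Sum>k\<le>Suc K. bb k * (gegenbauer lam (Suc k) y - poly (pm1 lam k) y)) = (\<Sum>k\<le>K. bb k * (gegenbauer lam (Suc k) y - poly (pm1 lam k) y))"
          by (rule sum_extend) (auto simp: bb_def)
        also have "\<dots> = (\<Sum>k\<le>K. \<beta> k * (gegenbauer lam (Suc k) y - poly (pm1 lam k) y))"
          by (rule sum.cong) (auto simp: bb_def)
        finally show ?thesis by simp
      qed
      also have "\<dots> = (\<Sum>k\<le>Suc K. ((if k = 0 then 0 else bb (k-1)) - bb (Suc k)) * gegenbauer lam k y)"
        unfolding shift_sum by (simp add: bb_def)
      finally show ?thesis .
    qed
    have IB: "F (Suc n) y - pcv fpoly (pm1 lam n) y - 2*(real n+lam) * pcv Fint (gp lam n) y = poly Fint y * gegen_S lam n"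
      if y: "y \<in> {-1..1}" for y
    proof -
      have "pcv (pderiv Fint) (gp lam (Suc n) - pm1 lam n) y - pcv Fint (pderiv (gp lam (Suc n) - pm1 lam n)) y
         = poly Fint y * poly (gp lam (Suc n) - pm1 lam n) (-1) - poly Fint (-1) * poly (gp lam (Suc n) - pm1 lam n) y"
        by (rule ibp) (use y in auto)
      then show ?thesis
        unfolding Fint_deriv pderiv_diff gp_deriv pcv_diff2 pcv_smult2 Fint_m1 gegen_S_eq F_def
        by simp
    qed
    have Fm: "pcv fpoly (pm1 lam n) y = (\<Sum>k\<le>Suc K. rp k * gegenbauer lam k y)" if y: "y \<in> {-1..1}" for y
    proof (cases n)
      case 0 then show ?thesis by (simp add: rp_def)
    next
      case (Suc j)
      then have "j \<le> N" using nk by simp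
      then show ?thesis using exp2[of j y] y Suc by (simp add: rp_def F_def)
    qed
    define co where "co = (\<lambda>k. R k (Suc n) - rp k - gegen_S lam n * R k 0 - ((if k = 0 then 0 else bb (k-1)) - bb (Suc k)) + (if k = 0 then cst else 0))"
    have co0: "\<forall>k\<le>Suc K. co k = 0"
    proof (rule gegen_unique[OF lam_gt lam_ne])
      fix y :: real assume y: "y \<in> {-1..1}"
      have "(\<Sum>k\<le>Suc K. co k * gegenbauer lam k y) = (\<Sum>k\<le>Suc K. R k (Suc n) * gegenbauer lam k y) - (\<Sum>k\<le>Suc K. rp k * gegenbauer lam k y)
         - gegen_S lam n * (\<Sum>k\<le>Suc K. R k 0 * gegenbauer lam k y)
         - (\<Sum>k\<le>Suc K. ((if k = 0 then 0 else bb (k-1)) - bb (Suc k)) * gegenbauer lam k y) + cst * gegenbauer lam 0 y"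
        unfolding co_def by (rule lin5)
      also have "\<dots> = F (Suc n) y - pcv fpoly (pm1 lam n) y - gegen_S lam n * F 0 y - (2*(real n+lam) * pcv Fint (gp lam n) y + cst) + cst"
        using exp2[of "Suc n" y] exp2[of 0 y] Fm[OF y] X[OF y] y nk by simp
      also have "\<dots> = 0" using IB[OF y] F0[OF y] by (simp add: algebra_simps)
      finally show "(\<Sum>k\<le>Suc K. co k * gegenbauer lam k y) = 0" .
    qed
    have kK: "k \<le> Suc K" "k - 1 \<le> K" "Suc k \<le> K" using nk by (auto simp: K_def)
    have rk: "real (k-1) = real k - 1" using nk by (simp add: of_nat_diff)
    have "co k = 0" using co0 kK by simp
    then have "R k (Suc n) = rp k + gegen_S lam n * R k 0 + bb (k-1) - bb (Suc k)"
      unfolding co_def using nk by simp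
    then show ?thesis using kK rk by (simp add: bb_def \<beta>_def rp_def algebra_simps)
  qed
  show ?thesis using conj1 conj2 conj3 conj4 by blast
qed

end
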